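(* In the protocol with double clipping, fix the graph $G$, a user $v_i$, a value $\tilde d_i>0$ of her noisy degree, and an index $j<i$ with $a_{i,j}=1$ in her clipped neighbor list (so that her clipped list has at most $\tilde d_i$ ones among indices $<i$), and let $\kappa_i\in[\mu^*\tilde d_i,\tilde d_i]$. Then, with probability taken over the first-round randomness, $$\Pr(t_{i,j}>\kappa_i)\le\exp\!\Big[-\tilde d_i\,D\big(\tfrac{\kappa_i}{\tilde d_i}\,\big\|\,\mu\big)\Big]\ \text{(variant F)},\qquad \Pr(t_{i,j}>\kappa_i)\le\exp\!\Big[-\tilde d_i\,D\big(\tfrac{\kappa_i}{\tilde d_i}\,\big\|\,\mu^2\big)\Big]\ \text{(variant O)},$$ $$\Pr(t_{i,j}>\kappa_i)\le\mu\exp\!\Big[-\tilde d_i\,D\big(\tfrac{\max\{\kappa_i,\mu^2\tilde d_i\}}{\tilde d_i}\,\big\|\,\mu^2\big)\Big]\ \text{(variant T)}.$$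
   Context: $D(p_1\|p_2)=p_1\log\frac{p_1}{p_2}+(1-p_1)\log\frac{1-p_1}{1-p_2}$ is the KL divergence between Bernoulli distributions. $ARR_{\epsilon,\mu}:\{0,1\}\to\{0,1\}$ satisfies $\Pr[ARR_{\epsilon,\mu}(1)=1]=\mu$, $\Pr[ARR_{\epsilon,\mu}(0)=1]=\mu e^{-\epsilon}$, with $\mu\in(0,\frac{e^{\epsilon_1}}{e^{\epsilon_1}+1}]$. Round 1: each $v_\ell$ computes $r_{\ell,m}=ARR_{\epsilon_1,\mu}(a_{\ell,m})$ for all $m<\ell$ (all independent, using the original adjacency matrix); $E'=\{\{v_m,v_\ell\}:m<\ell,r_{\ell,m}=1\}$. $\mu^*=\mu,\mu^2,\mu^3$ and $M_i=\{\{v_j,v_k\}\in E':j<k<i\}$, $\{\{v_j,v_k\}\in E':\{v_i,v_k\}\in E',j<k<i\}$, $\{\{v_j,v_k\}\in E':\{v_i,v_j\}\in E',\{v_i,v_k\}\in E',j<k<i\}$ in variants F, O, T respectively. The noisy degree $\tilde d_i$ is computed in round 2 with randomness independent of round 1, and $v_i$'s neighbor list is clipped (by removing ones) so that at most $\tilde d_i$ entries $a_{i,m}$, $m<i$, equal 1. Then $t_{i,j}=|\{k:j<k<i,a_{i,k}=1,\{v_j,v_k\}\in M_i\}|$ with $a_{i,k}$ from the clipped list. *)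

theory Defs
  imports "HOL-Probability.Probability"
begin

definition KLB :: "real \<Rightarrow> real \<Rightarrow> real" where
  "KLB p1 p2 = p1 * ln (p1 / p2) + (1 - p1) * ln ((1 - p1) / (1 - p2))"

definition ARR :: "real \<Rightarrow> real \<Rightarrow> bool \<Rightarrow> bool pmf" where
  "ARR eps mu b = bernoulli_pmf (if b then mu else mu * exp (- eps))"

text \<open>Index set of round-1 reports r_{l,m}, m < l, for vertices 0..n-1.\<close>
definition pairs :: "nat \<Rightarrow> (nat \<times> nat) set" where
  "pairs n = {(l, m). m < l \<and> l < n}"

definition round1 :: "nat \<Rightarrow> real \<Rightarrow> real \<Rightarrow> (nat \<Rightarrow> nat \<Rightarrow> bool) \<Rightarrow> (nat \<times> nat \<Rightarrow> bool) pmf" where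
  "round1 n eps mu A = Pi_pmf (pairs n) False (\<lambda>(l, m). ARR eps mu (A l m))"

text \<open>Membership of the undirected edge {v_x, v_y} in the noisy graph E'.\<close>
definition inE :: "(nat \<times> nat \<Rightarrow> bool) \<Rightarrow> nat \<Rightarrow> nat \<Rightarrow> bool" where
  "inE r x y = (if x < y then r (y, x) else if y < x then r (x, y) else False)"

datatype variant = VF | VO | VT

definition mu_star :: "variant \<Rightarrow> real \<Rightarrow> real" where
  "mu_star v mu = (case v of VF \<Rightarrow> mu | VO \<Rightarrow> mu ^ 2 | VT \<Rightarrow> mu ^ 3)"

definition inM :: "variant \<Rightarrow> (nat \<times> nat \<Rightarrow> bool) \<Rightarrow> nat \<Rightarrow> nat \<Rightarrow> nat \<Rightarrow> bool" where
  "inM v r i j k = (j < k \<and> k < i \<and> inE r j k \<and>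
     (case v of VF \<Rightarrow> True
              | VO \<Rightarrow> inE r i k
              | VT \<Rightarrow> inE r i j \<and> inE r i k))"

text \<open>t_{i,j} with clipped neighbor list c (c k = a_{i,k} after clipping).\<close>
definition tcount :: "variant \<Rightarrow> (nat \<times> nat \<Rightarrow> bool) \<Rightarrow> (nat \<Rightarrow> bool) \<Rightarrow> nat \<Rightarrow> nat \<Rightarrow> nat" where
  "tcount v r c i j = card {k. j < k \<and> k < i \<and> c k \<and> inM v r i j k}"

end

theory Submission
  imports Defs
begin


lemma key:
  fixes P :: "'i set" and p :: "'i \<Rightarrow> bool pmf" and W :: "bool \<Rightarrow> ennreal"
    and H :: "'k \<Rightarrow> bool \<Rightarrow> bool \<Rightarrow> ennreal"
  assumes "finite K" "finite P" "inj_on \<alpha> K" "inj_on \<beta> K"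
    "\<And>k k'. k\<in>K \<Longrightarrow> k'\<in>K \<Longrightarrow> \<alpha> k \<noteq> \<beta> k'"
    "\<alpha> ` K \<subseteq> P" "\<beta> ` K \<subseteq> P" "\<gamma> \<in> P" "\<gamma> \<notin> \<alpha> ` K" "\<gamma> \<notin> \<beta> ` K"
  shows "(\<integral>\<^sup>+r. W (r \<gamma>) * (\<Prod>k\<in>K. H k (r (\<alpha> k)) (r (\<beta> k))) \<partial>Pi_pmf P d p)
       = (\<integral>\<^sup>+x. W x \<partial>p \<gamma>) * (\<Prod>k\<in>K. \<integral>\<^sup>+a. \<integral>\<^sup>+b. H k a b \<partial>p (\<beta> k) \<partial>p (\<alpha> k))"
  using assms
proof (induction K arbitrary: P rule: finite_induct)
  case empty
  have "(\<integral>\<^sup>+r. W (r \<gamma>) \<partial>Pi_pmf P d p) = (\<integral>\<^sup>+x. W x \<partial>map_pmf (\<lambda>r. r \<gamma>) (Pi_pmf P d p))" by simp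
  also have "map_pmf (\<lambda>r. r \<gamma>) (Pi_pmf P d p) = p \<gamma>"
    using Pi_pmf_component[OF empty.prems(1), of \<gamma> d p] empty.prems by simp
  finally show ?case by simp
next
  case (insert k K)
  define P'' where "P'' = P - {\<alpha> k, \<beta> k}"
  have ab: "\<alpha> k \<noteq> \<beta> k" using insert by auto
  have P: "P = insert (\<alpha> k) (insert (\<beta> k) P'')" using insert.prems P''_def by auto
  have fin: "finite P''" using insert.prems P''_def by auto
  have nin1: "\<beta> k \<notin> P''" and nin2: "\<alpha> k \<notin> insert (\<beta> k) P''" using ab P''_def by auto
  have IH: "(\<integral>\<^sup>+r. W (r \<gamma>) * (\<Prod>k\<in>K. H k (r (\<alpha> k)) (r (\<beta> k))) \<partial>Pi_pmf P'' d p)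
       = (\<integral>\<^sup>+x. W x \<partial>p \<gamma>) * (\<Prod>k\<in>K. \<integral>\<^sup>+a. \<integral>\<^sup>+b. H k a b \<partial>p (\<beta> k) \<partial>p (\<alpha> k))"
  proof (rule insert.IH)
    show "finite P''" by (rule fin)
    show "inj_on \<alpha> K" "inj_on \<beta> K" using insert.prems(2,3) by (auto simp: inj_on_def)
    show "\<And>k1 k2. k1 \<in> K \<Longrightarrow> k2 \<in> K \<Longrightarrow> \<alpha> k1 \<noteq> \<beta> k2" using insert.prems(4) by blast
    show "\<gamma> \<notin> \<alpha> ` K" "\<gamma> \<notin> \<beta> ` K" using insert.prems(8,9) by auto
    show "\<gamma> \<in> P''" using insert.prems(7,8,9) unfolding P''_def by auto
    have "\<alpha> k' \<noteq> \<alpha> k" "\<beta> k' \<noteq> \<beta> k" if "k' \<in> K" for k'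
      using insert.prems(2,3) insert.hyps that unfolding inj_on_def by blast+
    moreover have "\<alpha> k' \<noteq> \<beta> k" "\<beta> k' \<noteq> \<alpha> k" if "k' \<in> K" for k'
      using insert.prems(4)[of k' k] insert.prems(4)[of k k'] that by auto
    ultimately show "\<alpha> ` K \<subseteq> P''" "\<beta> ` K \<subseteq> P''"
      using insert.prems(5,6) unfolding P''_def by auto
  qed
  have eq: "W ((f(\<beta> k := b, \<alpha> k := a)) \<gamma>) * (\<Prod>k'\<in>insert k K. H k' ((f(\<beta> k := b, \<alpha> k := a)) (\<alpha> k')) ((f(\<beta> k := b, \<alpha> k := a)) (\<beta> k')))
     = H k a b * (W (f \<gamma>) * (\<Prod>k'\<in>K. H k' (f (\<alpha> k')) (f (\<beta> k'))))" for f a b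
  proof -
    have "(\<Prod>k'\<in>K. H k' ((f(\<beta> k := b, \<alpha> k := a)) (\<alpha> k')) ((f(\<beta> k := b, \<alpha> k := a)) (\<beta> k')))
        = (\<Prod>k'\<in>K. H k' (f (\<alpha> k')) (f (\<beta> k')))"
    proof (rule prod.cong)
      fix k' assume k': "k' \<in> K"
      have "\<alpha> k' \<noteq> \<alpha> k" "\<beta> k' \<noteq> \<beta> k" using insert.prems(2,3) insert.hyps k' unfolding inj_on_def by blast+
      moreover have "\<alpha> k' \<noteq> \<beta> k" "\<beta> k' \<noteq> \<alpha> k" using insert.prems(4)[of k' k] insert.prems(4)[of k k'] k' by auto
      ultimately show "H k' ((f(\<beta> k := b, \<alpha> k := a)) (\<alpha> k')) ((f(\<beta> k := b, \<alpha> k := a)) (\<beta> k')) = H k' (f (\<alpha> k')) (f (\<beta> k'))"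
        by simp
    qed simp
    moreover have "\<gamma> \<noteq> \<alpha> k" "\<gamma> \<noteq> \<beta> k" using insert.prems by auto
    ultimately show ?thesis using insert.hyps ab by (simp add: mult_ac)
  qed
  have PP: "Pi_pmf P d p = map_pmf (\<lambda>(y,f). f(\<alpha> k := y))
      (pair_pmf (p (\<alpha> k)) (map_pmf (\<lambda>(y,f). f(\<beta> k := y)) (pair_pmf (p (\<beta> k)) (Pi_pmf P'' d p))))"
    unfolding P by (simp add: Pi_pmf_insert[OF _ nin2] Pi_pmf_insert[OF fin nin1] fin)
  have "(\<integral>\<^sup>+r. W (r \<gamma>) * (\<Prod>k\<in>insert k K. H k (r (\<alpha> k)) (r (\<beta> k))) \<partial>Pi_pmf P d p)
     = (\<integral>\<^sup>+a. \<integral>\<^sup>+b. \<integral>\<^sup>+f. H k a b * (W (f \<gamma>) * (\<Prod>k'\<in>K. H k' (f (\<alpha> k')) (f (\<beta> k')))) \<partial>Pi_pmf P'' d p \<partial>p (\<beta> k) \<partial>p (\<alpha> k))"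
    unfolding PP by (simp only: nn_integral_map_pmf nn_integral_pair_pmf' prod.case eq)
  also have "\<dots> = (\<integral>\<^sup>+a. \<integral>\<^sup>+b. H k a b * ((\<integral>\<^sup>+x. W x \<partial>p \<gamma>) * (\<Prod>k\<in>K. \<integral>\<^sup>+a. \<integral>\<^sup>+b. H k a b \<partial>p (\<beta> k) \<partial>p (\<alpha> k))) \<partial>p (\<beta> k) \<partial>p (\<alpha> k))"
    by (simp add: nn_integral_cmult IH)
  also have "\<dots> = (\<integral>\<^sup>+a. \<integral>\<^sup>+b. H k a b \<partial>p (\<beta> k) \<partial>p (\<alpha> k)) * ((\<integral>\<^sup>+x. W x \<partial>p \<gamma>) * (\<Prod>k\<in>K. \<integral>\<^sup>+a. \<integral>\<^sup>+b. H k a b \<partial>p (\<beta> k) \<partial>p (\<alpha> k)))"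
    by (simp add: nn_integral_multc)
  finally show ?case using insert.hyps by (simp add: mult_ac)
qed

lemma nn_bern:
  assumes "0 \<le> q" "q \<le> 1" "\<And>x. 0 \<le> f x"
  shows "(\<integral>\<^sup>+x. ennreal (f x) \<partial>bernoulli_pmf q) = ennreal (f True * q + f False * (1 - q))"
  using assms by (simp add: ennreal_mult ennreal_plus)

lemma prod_if_pow:
  assumes "finite K"
  shows "(\<Prod>k\<in>K. if Q k then (e::real) else 1) = e ^ card {k\<in>K. Q k}"
proof -
  have "(\<Prod>k\<in>K. if Q k then e else 1) = (\<Prod>k\<in>K \<inter> {x. Q x}. e) * (\<Prod>k\<in>K \<inter> - {x. Q x}. 1)"
    by (rule prod.If_cases[OF assms])
  also have "K \<inter> {x. Q x} = {k\<in>K. Q k}" by auto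
  finally show ?thesis by simp
qed



lemma chern_real:
  assumes pp: "0 < pp" "pp < 1" and dt: "0 < dt" and k: "pp * dt \<le> \<kappa>" "\<kappa> < dt" and m: "real m \<le> dt"
  shows "\<exists>l\<ge>0. exp (- l * \<kappa>) * (1 + pp * (exp l - 1)) ^ m \<le> exp (- dt * KLB (\<kappa> / dt) pp)"
proof -
  define q where "q = \<kappa> / dt"
  have "0 < pp * dt" using pp dt by simp
  hence "0 < \<kappa>" using k by linarith
  have q: "pp \<le> q" "q < 1" "0 < q" using pp dt k \<open>0 < \<kappa>\<close> unfolding q_def by (auto simp: field_simps)
  have kq: "\<kappa> = q * dt" using dt unfolding q_def by simp
  define l where "l = ln (q * (1 - pp) / (pp * (1 - q)))"
  have pos: "0 < q * (1 - pp) / (pp * (1 - q))" using q pp by simp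
  have el: "exp l = q * (1 - pp) / (pp * (1 - q))" unfolding l_def using pos by simp
  have "pp * (1 - q) \<le> q * (1 - pp)" using q pp by (simp add: algebra_simps)
  hence "1 \<le> q * (1 - pp) / (pp * (1 - q))" using q pp by simp
  hence l0: "0 \<le> l" unfolding l_def by simp
  define B where "B = 1 + pp * (exp l - 1)"
  have B: "B = (1 - pp) / (1 - q)" unfolding B_def el using q pp by (simp add: field_simps)
  have B1: "1 \<le> B" unfolding B using q pp by simp
  have "B ^ m = B powr real m" using B1 by (simp add: powr_realpow)
  also have "\<dots> \<le> B powr dt" using B1 m by (intro powr_mono) auto
  also have "\<dots> = exp (dt * ln B)" using B1 by (simp add: powr_def)
  finally have Bm: "B ^ m \<le> exp (dt * ln B)" .
  have lnB: "ln B = ln (1 - pp) - ln (1 - q)" unfolding B using q pp by (simp add: ln_div)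
  have lval: "l = ln q + ln (1 - pp) - ln pp - ln (1 - q)" unfolding l_def using q pp
    by (simp add: ln_div ln_mult)
  have KL: "KLB q pp = q * (ln q - ln pp) + (1 - q) * (ln (1 - q) - ln (1 - pp))"
    unfolding KLB_def using q pp by (simp add: ln_div)
  have "- l * \<kappa> + dt * ln B = - dt * KLB q pp"
    unfolding KL lnB lval kq by (simp add: algebra_simps)
  have "exp (- l * \<kappa>) * B ^ m \<le> exp (- l * \<kappa>) * exp (dt * ln B)"
    using Bm by simp
  also have "\<dots> = exp (- dt * KLB q pp)"
    using \<open>- l * \<kappa> + dt * ln B = - dt * KLB q pp\<close> by (simp flip: exp_add)
  finally show ?thesis using l0 unfolding B_def q_def by blast
qed



lemma fin_pairs: "finite (pairs n)"
  by (rule finite_subset[of _ "{..<n} \<times> {..<n}"]) (auto simp: pairs_def)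

lemma mgf:
  fixes n i j :: nat and A :: "nat \<Rightarrow> nat \<Rightarrow> bool" and c :: "nat \<Rightarrow> bool"
    and eps mu \<kappa> l :: real and two vt :: bool
  assumes eps: "0 \<le> eps" and mu: "0 < mu" "mu < 1" and i: "i < n" and j: "j < i"
    and clip_sub: "\<And>k. k < i \<Longrightarrow> c k \<Longrightarrow> A i k" and cj: "c j" and l0: "0 \<le> l"
  defines "K \<equiv> {k. j < k \<and> k < i \<and> c k}"
  shows "measure_pmf.prob (round1 n eps mu A)
           {r. \<kappa> < real (card {k\<in>K. r (k, j) \<and> (two \<longrightarrow> r (i, k))}) \<and> (vt \<longrightarrow> r (i, j))}
     \<le> (if vt then mu else 1) * (exp (- l * \<kappa>) * (1 + (if two then mu ^ 2 else mu) * (exp l - 1)) ^ card K)"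
proof -
  define p :: "nat \<times> nat \<Rightarrow> bool pmf" where "p = (\<lambda>(l, m). ARR eps mu (A l m))"
  have pv: "p (a, b) = bernoulli_pmf (if A a b then mu else mu * exp (- eps))" for a b
    unfolding p_def ARR_def by simp
  define R where "R = round1 n eps mu A"
  have R: "R = Pi_pmf (pairs n) False p" unfolding R_def round1_def p_def by simp
  define e where "e = exp l"
  have e1: "1 \<le> e" unfolding e_def using l0 by simp
  define pp where "pp = (if two then mu ^ 2 else mu)"
  define Q where "Q = (\<lambda>r k. r (k, j) \<and> (two \<longrightarrow> r (i, k)))"
  define S where "S = {r. \<kappa> < real (card {k\<in>K. Q r k}) \<and> (vt \<longrightarrow> r (i, j))}"
  define w :: "bool \<Rightarrow> real" where "w = (\<lambda>x. if vt \<and> \<not> x then 0 else 1)"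
  define h :: "bool \<Rightarrow> bool \<Rightarrow> real" where "h = (\<lambda>a b. if a \<and> (two \<longrightarrow> b) then e else 1)"
  define fk :: "nat \<Rightarrow> real" where
    "fk = (\<lambda>k. 1 + (if A k j then mu else mu * exp (- eps)) * (if two then mu else 1) * (e - 1))"
  have finK: "finite K" unfolding K_def by (rule finite_subset[of _ "{..<i}"]) auto
  have h0: "0 \<le> h a b" for a b unfolding h_def using e1 by auto
  have w0: "0 \<le> w x" for x unfolding w_def by auto
  \<comment> \<open>pointwise Markov bound\<close>
  have point: "indicator S r \<le> ennreal (exp (- l * \<kappa>)) *
      (ennreal (w (r (i, j))) * (\<Prod>k\<in>K. ennreal (h (r (k, j)) (r (i, k)))))" for r
  proof -
    have "(\<Prod>k\<in>K. ennreal (h (r (k, j)) (r (i, k)))) = ennreal (\<Prod>k\<in>K. h (r (k, j)) (r (i, k)))"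
      using h0 by (simp add: prod_ennreal)
    also have "(\<Prod>k\<in>K. h (r (k, j)) (r (i, k))) = (\<Prod>k\<in>K. if Q r k then e else 1)"
      unfolding h_def Q_def by simp
    also have "\<dots> = e ^ card {k\<in>K. Q r k}" by (rule prod_if_pow[OF finK])
    also have "\<dots> = exp (real (card {k\<in>K. Q r k}) * l)" unfolding e_def by (simp add: exp_of_nat_mult)
    finally have pr: "(\<Prod>k\<in>K. ennreal (h (r (k, j)) (r (i, k)))) = ennreal (exp (real (card {k\<in>K. Q r k}) * l))" .
    show ?thesis
    proof (cases "r \<in> S")
      case True
      hence w1: "w (r (i, j)) = 1" and lt: "\<kappa> < real (card {k\<in>K. Q r k})" unfolding S_def w_def by auto
      have "0 \<le> - l * \<kappa> + real (card {k\<in>K. Q r k}) * l" using lt l0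
        by (metis add.commute diff_ge_0_iff_ge le_less minus_mult_left mult_right_mono uminus_add_conv_diff mult.commute)
      hence "1 \<le> exp (- l * \<kappa>) * exp (real (card {k\<in>K. Q r k}) * l)" by (simp flip: exp_add)
      hence "ennreal 1 \<le> ennreal (exp (- l * \<kappa>) * exp (real (card {k\<in>K. Q r k}) * l))"
        by (rule ennreal_leI)
      thus ?thesis using True by (simp add: pr w1 ennreal_mult)
    qed simp
  qed
  have "emeasure R S = (\<integral>\<^sup>+r. indicator S r \<partial>R)" by simp
  also have "\<dots> \<le> (\<integral>\<^sup>+r. ennreal (exp (- l * \<kappa>)) *
      (ennreal (w (r (i, j))) * (\<Prod>k\<in>K. ennreal (h (r (k, j)) (r (i, k))))) \<partial>R)"
    by (intro nn_integral_mono point)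
  also have "\<dots> = ennreal (exp (- l * \<kappa>)) * (\<integral>\<^sup>+r.
      (ennreal (w (r (i, j))) * (\<Prod>k\<in>K. ennreal (h (r (k, j)) (r (i, k))))) \<partial>R)"
    by (simp add: nn_integral_cmult)
  also have "(\<integral>\<^sup>+r. (ennreal (w (r (i, j))) * (\<Prod>k\<in>K. ennreal (h (r (k, j)) (r (i, k))))) \<partial>R)
     = (\<integral>\<^sup>+x. ennreal (w x) \<partial>p (i, j)) *
       (\<Prod>k\<in>K. \<integral>\<^sup>+a. \<integral>\<^sup>+b. ennreal (h a b) \<partial>p (i, k) \<partial>p (k, j))"
    unfolding R
    by (rule key[where W = "\<lambda>x. ennreal (w x)" and H = "\<lambda>k a b. ennreal (h a b)"
          and \<alpha> = "\<lambda>k. (k, j)" and \<beta> = "\<lambda>k. (i, k)" and \<gamma> = "(i, j)", OF finK])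
       (use i j fin_pairs in \<open>auto simp: K_def pairs_def inj_on_def\<close>)
  also have "(\<integral>\<^sup>+x. ennreal (w x) \<partial>p (i, j)) = ennreal (if vt then mu else 1)"
  proof -
    have "A i j" using clip_sub[OF j cj] .
    hence "p (i, j) = bernoulli_pmf mu" by (simp add: pv)
    thus ?thesis using mu w0 by (simp add: nn_bern) (auto simp: w_def simp flip: ennreal_plus)
  qed
  also have "(\<Prod>k\<in>K. \<integral>\<^sup>+a. \<integral>\<^sup>+b. ennreal (h a b) \<partial>p (i, k) \<partial>p (k, j)) = (\<Prod>k\<in>K. ennreal (fk k))"
  proof (rule prod.cong)
    fix k assume k: "k \<in> K"
    have "A i k" using clip_sub k unfolding K_def by auto
    hence pik: "p (i, k) = bernoulli_pmf mu" by (simp add: pv)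
    define q where "q = (if A k j then mu else mu * exp (- eps))"
    have q: "0 \<le> q" "q \<le> 1" unfolding q_def using mu eps
      by (auto intro!: mult_le_one simp: less_imp_le)
    have pkj: "p (k, j) = bernoulli_pmf q" by (simp add: pv q_def)
    have inner: "(\<integral>\<^sup>+b. ennreal (h a b) \<partial>p (i, k)) = ennreal (if a then (if two then e * mu + (1 - mu) else e) else 1)" for a
      unfolding pik using mu h0 by (subst nn_bern) (auto simp: h_def algebra_simps)
      have emu: "mu \<le> 1 + e * mu" using e1 mu by (simp add: add_increasing less_imp_le)
      show "(\<integral>\<^sup>+a. \<integral>\<^sup>+b. ennreal (h a b) \<partial>p (i, k) \<partial>p (k, j)) = ennreal (fk k)"
      unfolding inner pkj using q mu e1 emu
      by (subst nn_bern) (auto simp: fk_def q_def[symmetric] algebra_simps)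
  qed simp
  also have "(\<Prod>k\<in>K. ennreal (fk k)) = ennreal (\<Prod>k\<in>K. fk k)"
    by (rule prod_ennreal) (auto simp: fk_def intro!: add_nonneg_nonneg mult_nonneg_nonneg
         less_imp_le[OF mu(1)] e1)
  finally have em0: "emeasure R S \<le> ennreal (exp (- l * \<kappa>)) * (ennreal (if vt then mu else 1) * ennreal (\<Prod>k\<in>K. fk k))" .
  have fk0: "0 \<le> (\<Prod>k\<in>K. fk k)"
    by (rule prod_nonneg) (auto simp: fk_def intro!: add_nonneg_nonneg mult_nonneg_nonneg
         less_imp_le[OF mu(1)] e1)
  have "ennreal (exp (- l * \<kappa>)) * (ennreal (if vt then mu else 1) * ennreal (\<Prod>k\<in>K. fk k))
      = ennreal (exp (- l * \<kappa>) * ((if vt then mu else 1) * (\<Prod>k\<in>K. fk k)))"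
    using fk0 mu by (simp add: ennreal_mult)
  with em0 have em: "emeasure R S \<le> ennreal (exp (- l * \<kappa>) * ((if vt then mu else 1) * (\<Prod>k\<in>K. fk k)))"
    by simp
  have fkb: "(\<Prod>k\<in>K. fk k) \<le> (\<Prod>k\<in>K. 1 + pp * (e - 1))"
  proof (rule prod_mono)
    fix k assume "k \<in> K"
    define q where "q = (if A k j then mu else mu * exp (- eps))"
    have q: "0 \<le> q" "q \<le> mu" unfolding q_def using mu eps
      by (auto intro!: mult_left_le simp: less_imp_le)
    have "q * (if two then mu else 1) \<le> pp"
      using q mu unfolding pp_def by (auto simp: power2_eq_square intro: mult_right_mono)
    hence "q * (if two then mu else 1) * (e - 1) \<le> pp * (e - 1)" using e1 by (intro mult_right_mono) auto
    moreover have "0 \<le> q * (if two then mu else 1) * (e - 1)" using q mu e1 by auto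
    ultimately show "0 \<le> fk k \<and> fk k \<le> 1 + pp * (e - 1)" unfolding fk_def q_def[symmetric] by auto
  qed
  have "measure_pmf.prob R S \<le> exp (- l * \<kappa>) * ((if vt then mu else 1) * (\<Prod>k\<in>K. fk k))"
  proof -
    have X0: "0 \<le> exp (- l * \<kappa>) * ((if vt then mu else 1) * (\<Prod>k\<in>K. fk k))"
      using fk0 mu by auto
    show ?thesis using em X0 by (simp add: measure_pmf.emeasure_eq_measure)
  qed
  also have "\<dots> \<le> exp (- l * \<kappa>) * ((if vt then mu else 1) * (1 + pp * (e - 1)) ^ card K)"
    using fkb mu by (intro mult_left_mono) auto
  finally show ?thesis unfolding R_def S_def Q_def pp_def e_def by (simp add: mult_ac)
qed



theorem theorem5p2:
  fixes n i j :: nat and A :: "nat \<Rightarrow> nat \<Rightarrow> bool" and c :: "nat \<Rightarrow> bool"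
    and eps mu dt kappa :: real and v :: variant
  assumes sym: "\<And>x y. A x y = A y x"
    and irrefl: "\<And>x. \<not> A x x"
    and eps: "eps > 0"
    and mu: "0 < mu" "mu \<le> exp eps / (exp eps + 1)"
    and i: "i < n" and j: "j < i"
    and dt: "dt > 0"
    and clip_sub: "\<And>k. k < i \<Longrightarrow> c k \<Longrightarrow> A i k"
    and clip_card: "real (card {k. k < i \<and> c k}) \<le> dt"
    and cj: "c j"
    and kappa: "mu_star v mu * dt \<le> kappa" "kappa \<le> dt"
  shows "measure_pmf.prob (round1 n eps mu A) {r. real (tcount v r c i j) > kappa}
         \<le> (case v of
               VF \<Rightarrow> exp (- dt * KLB (kappa / dt) mu)
             | VO \<Rightarrow> exp (- dt * KLB (kappa / dt) (mu ^ 2))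
             | VT \<Rightarrow> mu * exp (- dt * KLB (max kappa (mu ^ 2 * dt) / dt) (mu ^ 2)))"
proof -
  have mu1: "mu < 1"
  proof -
    have "exp eps / (exp eps + 1) < 1" by (simp add: divide_less_eq add_pos_pos)
    thus ?thesis using mu by linarith
  qed
  define K where "K = {k. j < k \<and> k < i \<and> c k}"
  define two where "two = (v \<noteq> VF)"
  define vt where "vt = (v = VT)"
  define Q where "Q = (\<lambda>r k. r (k, j) \<and> (two \<longrightarrow> r (i, k)))"
  have finK: "finite K" unfolding K_def by (rule finite_subset[of _ "{..<i}"]) auto
  have "insert j K \<subseteq> {k. k < i \<and> c k}" using j cj unfolding K_def by auto
  hence "card (insert j K) \<le> card {k. k < i \<and> c k}" by (intro card_mono) auto
  moreover have "j \<notin> K" unfolding K_def by auto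
  ultimately have "card K + 1 \<le> card {k. k < i \<and> c k}" using finK by simp
  hence cK: "real (card K) + 1 \<le> dt" using clip_card by linarith
  have ms_pos: "0 < mu_star v mu" using mu by (cases v) (auto simp: mu_star_def)
  have kpos: "0 < kappa" using kappa(1) ms_pos dt by (smt (verit) mult_pos_pos)
  have tc: "tcount v r c i j = card {k\<in>K. Q r k \<and> (vt \<longrightarrow> r (i, j))}" for r
  proof -
    have "{k. j < k \<and> k < i \<and> c k \<and> inM v r i j k} = {k\<in>K. Q r k \<and> (vt \<longrightarrow> r (i, j))}"
      using j unfolding K_def Q_def two_def vt_def inM_def inE_def
      by (cases v) auto
    thus ?thesis unfolding tcount_def by simp
  qed
  have tcK: "tcount v r c i j \<le> card K" for r
    unfolding tc by (rule card_mono[OF finK]) auto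
  have ev: "{r. real (tcount v r c i j) > kappa} = {r. kappa < real (card {k\<in>K. Q r k}) \<and> (vt \<longrightarrow> r (i, j))}"
  proof (intro Collect_cong iffI)
    fix r assume "real (tcount v r c i j) > kappa"
    hence h: "kappa < real (card {k\<in>K. Q r k \<and> (vt \<longrightarrow> r (i, j))})" unfolding tc .
    show "kappa < real (card {k\<in>K. Q r k}) \<and> (vt \<longrightarrow> r (i, j))"
    proof (cases "vt \<longrightarrow> r (i, j)")
      case True thus ?thesis using h by simp
    next
      case False thus ?thesis using h kpos by simp
    qed
  next
    fix r assume "kappa < real (card {k\<in>K. Q r k}) \<and> (vt \<longrightarrow> r (i, j))"
    thus "real (tcount v r c i j) > kappa" unfolding tc by simp
  qed
  define RHS where "RHS = (case v of
               VF \<Rightarrow> exp (- dt * KLB (kappa / dt) mu)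
             | VO \<Rightarrow> exp (- dt * KLB (kappa / dt) (mu ^ 2))
             | VT \<Rightarrow> mu * exp (- dt * KLB (max kappa (mu ^ 2 * dt) / dt) (mu ^ 2)))"
  have RHS0: "0 \<le> RHS" unfolding RHS_def using mu by (cases v) auto
  define P where "P = measure_pmf.prob (round1 n eps mu A) {r. kappa < real (card {k\<in>K. Q r k}) \<and> (vt \<longrightarrow> r (i, j))}"
  have mgf': "P \<le> (if vt then mu else 1) * (exp (- l * kappa) * (1 + (if two then mu ^ 2 else mu) * (exp l - 1)) ^ card K)"
    if "0 \<le> l" for l
    unfolding P_def Q_def K_def
    by (rule mgf) (use eps mu mu1 i j clip_sub cj that in auto)
  show ?thesis
  proof (cases "kappa = dt")
    case True
    have "{r. real (tcount v r c i j) > kappa} = {}"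
      using tcK cK True by (auto simp: not_less) (smt (verit) of_nat_mono tcK)
    thus ?thesis using RHS0 unfolding RHS_def by simp
  next
    case False
    hence klt: "kappa < dt" using kappa by simp
    have mle: "real (card K) \<le> dt" using cK by linarith
    have main: "P \<le> RHS"
    proof (cases v)
      case VF
      have "mu * dt \<le> kappa" using kappa VF by (simp add: mu_star_def)
      then obtain l where l: "0 \<le> l" "exp (- l * kappa) * (1 + mu * (exp l - 1)) ^ card K \<le> exp (- dt * KLB (kappa / dt) mu)"
        using chern_real[OF mu(1) mu1 dt _ klt mle] by blast
      show ?thesis using mgf'[OF l(1)] l(2) VF unfolding RHS_def two_def vt_def by simp
    next
      case VO
      have mu2: "0 < mu ^ 2" "mu ^ 2 < 1" using mu mu1 mult_strict_mono[of mu 1 mu 1] by (auto simp: power2_eq_square)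
      have "mu ^ 2 * dt \<le> kappa" using kappa VO by (simp add: mu_star_def)
      then obtain l where l: "0 \<le> l" "exp (- l * kappa) * (1 + mu ^ 2 * (exp l - 1)) ^ card K \<le> exp (- dt * KLB (kappa / dt) (mu ^ 2))"
        using chern_real[OF mu2 dt _ klt mle] by blast
      show ?thesis using mgf'[OF l(1)] l(2) VO unfolding RHS_def two_def vt_def by simp
    next
      case VT
      have mu2: "0 < mu ^ 2" "mu ^ 2 < 1" using mu mu1 mult_strict_mono[of mu 1 mu 1] by (auto simp: power2_eq_square)
      show ?thesis
      proof (cases "mu ^ 2 * dt \<le> kappa")
        case True
        then obtain l where l: "0 \<le> l" "exp (- l * kappa) * (1 + mu ^ 2 * (exp l - 1)) ^ card K \<le> exp (- dt * KLB (kappa / dt) (mu ^ 2))"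
          using chern_real[OF mu2 dt _ klt mle] by blast
        have "P \<le> mu * (exp (- l * kappa) * (1 + mu ^ 2 * (exp l - 1)) ^ card K)"
          using mgf'[OF l(1)] VT unfolding two_def vt_def by simp
        also have "\<dots> \<le> mu * exp (- dt * KLB (kappa / dt) (mu ^ 2))"
          using l(2) mu by (intro mult_left_mono) auto
        finally show ?thesis using True VT unfolding RHS_def by (simp add: max_def)
      next
        case False
        have "P \<le> mu" using mgf'[of 0] VT unfolding two_def vt_def by simp
        moreover have "max kappa (mu ^ 2 * dt) / dt = mu ^ 2" using False dt by (simp add: max_def)
        moreover have "KLB (mu ^ 2) (mu ^ 2) = 0" unfolding KLB_def using mu2 by simp
        ultimately show ?thesis using VT unfolding RHS_def by simp
      qed
    qed
    thus ?thesis using ev unfolding P_def RHS_def by simp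
  qed
qed

end
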